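(* Let $X=X_\Sigma$ be the toric manifold described in the context, and let $S_1$ be the torus invariant surface associated to the $(d-2)$-dimensional cone of $\Sigma$ generated by all ray generators except $v_1,y_1,z_1,t_1,u_1$. Then $$2(\mathrm{ch}_2(X)\cdot S_1)=-p_1-p_4+b_1p_2-2(c_2+\cdots+c_{p_2})-(b_1+1)+\sum_{i=2}^{p_3}\bigl(b_1-2b_i-1\bigr).$$
   Context: Let $N=\mathbb{Z}^d$ and let $\Sigma$ be a smooth projective complete fan in $N_\mathbb{R}$ whose set of primitive ray generators is $\{v_1,\dots,v_{p_0},y_1,\dots,y_{p_1},z_1,\dots,z_{p_2},t_1,\dots,t_{p_3},u_1,\dots,u_{p_4}\}$, where $p_0,\dots,p_4$ are positive integers with $p_0+p_1+p_2+p_3+p_4-3=d$. A primitive collection is a set of ray generators not generating a cone of $\Sigma$ while every proper subset does. The primitive collections of $\Sigma$ are exactly $\{v_i\}\cup\{y_j\}$, $\{y_j\}\cup\{z_j\}$, $\{z_j\}\cup\{t_j\}$, $\{t_j\}\cup\{u_j\}$, $\{u_j\}\cup\{v_j\}$ (all elements of the indicated groups), with primitive relations $v_1+\cdots+v_{p_0}+y_1+\cdots+y_{p_1}=c_2z_2+\cdots+c_{p_2}z_{p_2}+(b_1+1)t_1+\cdots+(b_{p_3}+1)t_{p_3}$, $y_1+\cdots+y_{p_1}+z_1+\cdots+z_{p_2}=u_1+\cdots+u_{p_4}$, $z_1+\cdots+z_{p_2}+t_1+\cdots+t_{p_3}=0$, $t_1+\cdots+t_{p_3}+u_1+\cdots+u_{p_4}=y_1+\cdots+y_{p_1}$,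 $u_1+\cdots+u_{p_4}+v_1+\cdots+v_{p_0}=c_2z_2+\cdots+c_{p_2}z_{p_2}+b_1t_1+\cdots+b_{p_3}t_{p_3}$, with $b_i,c_j\in\mathbb{Z}_{\ge0}$, and $c_2=\min_j c_j$, $b_1=\min_i b_i$. $X=X_\Sigma$. With $D_1,\dots,D_n$ the torus invariant prime divisors, $\mathrm{ch}_2(X)=\frac12\sum D_i^2$. *)

theory Defs
  imports "HOL-Analysis.Analysis" "HOL-Library.Multiset"
begin

text \<open>Ray generators are indexed by pairs (k, j): group k (0 = v, 1 = y, 2 = z, 3 = t, 4 = u),
  position j with 1 \<le> j \<le> p k.\<close>

definition grp :: "(nat \<Rightarrow> nat) \<Rightarrow> nat \<Rightarrow> (nat \<times> nat) set" where
  "grp p k = {(k, j) | j. 1 \<le> j \<and> j \<le> p k}"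

definition Rays :: "(nat \<Rightarrow> nat) \<Rightarrow> (nat \<times> nat) set" where
  "Rays p = (\<Union>k<5. grp p k)"

definition primcoll :: "(nat \<Rightarrow> nat) \<Rightarrow> nat \<Rightarrow> (nat \<times> nat) set" where
  "primcoll p k = grp p k \<union> grp p ((k + 1) mod 5)"

text \<open>For a simplicial fan, a set of rays spans a cone iff it contains no primitive collection.\<close>
definition is_cone :: "(nat \<Rightarrow> nat) \<Rightarrow> (nat \<times> nat) set \<Rightarrow> bool" where
  "is_cone p C \<longleftrightarrow> C \<subseteq> Rays p \<and> (\<forall>k<5. \<not> primcoll p k \<subseteq> C)"

definition rvec :: "int ^ 'n \<Rightarrow> real ^ 'n" where
  "rvec x = (\<chi> k. real_of_int (x $ k))"

definition idot :: "int ^ 'n \<Rightarrow> int ^ 'n \<Rightarrow> int" where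
  "idot u x = (\<Sum>k\<in>UNIV. u $ k * x $ k)"

definition cone_of :: "(nat \<times> nat \<Rightarrow> int ^ 'n) \<Rightarrow> (nat \<times> nat) set \<Rightarrow> (real ^ 'n) set" where
  "cone_of w C = {(\<Sum>i\<in>C. a i *\<^sub>R rvec (w i)) | a. \<forall>i\<in>C. 0 \<le> a i}"

text \<open>Geometric conditions: the cones cone(w ` C), C a cone, form a fan (pairwise intersections
  are common faces), which is complete, smooth (maximal cones are generated by a Z-basis)
  and projective (admits a strictly convex support function / ample divisor).\<close>
definition smooth_projective_complete_fan ::
  "(nat \<Rightarrow> nat) \<Rightarrow> (nat \<times> nat \<Rightarrow> int ^ 'n) \<Rightarrow> bool" where
  "smooth_projective_complete_fan p w \<longleftrightarrow>
     (\<forall>C C'. is_cone p C \<and> is_cone p C' \<longrightarrow> cone_of w C \<inter> cone_of w C' = cone_of w (C \<inter> C')) \<and>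
     (\<forall>x :: real ^ 'n. \<exists>C. is_cone p C \<and> x \<in> cone_of w C) \<and>
     (\<forall>C. is_cone p C \<and> card C = CARD('n) \<longrightarrow>
        (\<forall>x :: int ^ 'n. \<exists>a. x = (\<Sum>i\<in>C. a i *s w i)) \<and>
        (\<forall>a. (\<Sum>i\<in>C. a i *s w i) = 0 \<longrightarrow> (\<forall>i\<in>C. a i = 0))) \<and>
     (\<exists>a :: nat \<times> nat \<Rightarrow> real. \<forall>C. is_cone p C \<and> card C = CARD('n) \<longrightarrow>
        (\<exists>m :: real ^ 'n. (\<forall>i\<in>C. m \<bullet> rvec (w i) = - a i) \<and>
                          (\<forall>j\<in>Rays p - C. m \<bullet> rvec (w j) > - a j)))"

text \<open>Degree map on the top graded piece of the Chow ring
  A(X) = Z[D_i] / (Stanley-Reisner ideal + linear relations) of the smooth complete toric variety: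
  a monomial of degree d is a multiset of rays of size d.  These conditions determine the degree map uniquely.\<close>
definition toric_degree ::
  "(nat \<Rightarrow> nat) \<Rightarrow> (nat \<times> nat \<Rightarrow> int ^ 'n) \<Rightarrow> ((nat \<times> nat) multiset \<Rightarrow> int) \<Rightarrow> bool" where
  "toric_degree p w deg \<longleftrightarrow>
     (\<forall>m. size m = CARD('n) \<and> set_mset m \<subseteq> Rays p \<and> \<not> is_cone p (set_mset m) \<longrightarrow> deg m = 0) \<and>
     (\<forall>C. is_cone p C \<and> card C = CARD('n) \<longrightarrow> deg (mset_set C) = 1) \<and>
     (\<forall>m (u :: int ^ 'n). size m + 1 = CARD('n) \<and> set_mset m \<subseteq> Rays p \<longrightarrow>
        (\<Sum>i\<in>Rays p. idot u (w i) * deg (m + {#i#})) = 0)"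

end

theory Submission
  imports Defs
begin

lemma idot_add: "idot u (x + y) = idot u x + idot u y"
  by (simp add: idot_def distrib_left sum.distrib)
lemma idot_zero: "idot u 0 = 0" by (simp add: idot_def)
lemma idot_smult: "idot u (a *s x) = a * idot u x"
  by (simp add: idot_def vector_scalar_mult_def sum_distrib_left algebra_simps)
lemma idot_sum: "idot u (sum f S) = (\<Sum>i\<in>S. idot u (f i))"
  by (simp add: idot_def sum_distrib_left sum.swap[of _ UNIV])

lemma ind_mult: "(if P then (1::int) else 0) * x = (if P then x else 0)" by simp
lemma mult_ind: "x * (if P then (1::int) else 0) = (if P then x else 0)" by simp

lemma sum_ind: "finite C \<Longrightarrow> l \<in> C \<Longrightarrow> (\<Sum>i\<in>C. (if i = l then (1::int) else 0) * g i) = g l"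
  by (simp add: ind_mult sum.delta')
lemma sum_ind': "finite C \<Longrightarrow> l \<in> C \<Longrightarrow> (\<Sum>i\<in>C. g i * (if i = l then (1::int) else 0)) = g l"
  by (simp add: mult_ind sum.delta')
lemma sum_ind2: "finite C \<Longrightarrow> l \<in> C \<Longrightarrow> (\<Sum>i\<in>C. g i * (if l = i then (1::int) else 0)) = g l"
  by (simp add: mult_ind sum.delta)

lemma dual_exists:
  fixes w :: "'i \<Rightarrow> int ^ 'n" and C :: "'i set"
  assumes fin: "finite C"
    and span: "\<forall>x::int^'n. \<exists>a. x = (\<Sum>i\<in>C. a i *s w i)"
    and indep: "\<forall>a. (\<Sum>i\<in>C. a i *s w i) = 0 \<longrightarrow> (\<forall>i\<in>C. a i = 0)"
  shows "\<exists>u. \<forall>l\<in>C. idot u (w l) = f l"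
proof -
  from span have "\<forall>k. \<exists>a. (\<chi> m. if m = k then (1::int) else 0) = (\<Sum>i\<in>C. a i *s w i)" by blast
  then obtain A where A: "\<And>k. (\<chi> m. if m = k then (1::int) else 0) = (\<Sum>i\<in>C. A k i *s w i)"
    by metis
  define u :: "int^'n" where "u = (\<chi> k. \<Sum>i\<in>C. A k i * f i)"
  have delta: "(\<Sum>k\<in>UNIV. A k i * w l $ k) = (if i = l then 1 else 0)" if l: "l \<in> C" and i: "i \<in> C" for l i
  proof -
    define a where "a i = (\<Sum>k\<in>UNIV. A k i * w l $ k) - (if i = l then 1 else 0)" for i
    have "(\<Sum>i\<in>C. a i *s w i) = 0"
    proof (subst vec_eq_iff, intro allI)
      fix m
      have "(\<Sum>i\<in>C. a i *s w i) $ m = (\<Sum>i\<in>C. a i * w i $ m)"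
        by (simp add: vector_scalar_mult_def)
      also have "\<dots> = (\<Sum>i\<in>C. (\<Sum>k\<in>UNIV. A k i * w l $ k) * w i $ m) - (\<Sum>i\<in>C. (if i = l then 1 else 0) * w i $ m)"
        by (simp add: a_def left_diff_distrib sum_subtractf)
      also have "(\<Sum>i\<in>C. (if i = l then 1 else 0) * w i $ m) = w l $ m"
        using sum_ind[OF fin l, of "\<lambda>i. w i $ m"] by simp
      also have "(\<Sum>i\<in>C. (\<Sum>k\<in>UNIV. A k i * w l $ k) * w i $ m)
          = (\<Sum>k\<in>UNIV. w l $ k * (\<Sum>i\<in>C. A k i * w i $ m))"
        by (simp add: sum_distrib_left sum_distrib_right sum.swap[of _ C] algebra_simps)
      also have "\<dots> = (\<Sum>k\<in>UNIV. w l $ k * (if m = k then 1 else 0))"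
      proof (rule sum.cong[OF refl])
        fix k
        have "(\<Sum>i\<in>C. A k i * w i $ m) = (\<Sum>i\<in>C. A k i *s w i) $ m"
          by (simp add: vector_scalar_mult_def)
        also have "\<dots> = (if m = k then 1 else 0)" by (simp flip: A)
        finally show "w l $ k * (\<Sum>i\<in>C. A k i * w i $ m) = w l $ k * (if m = k then 1 else 0)" by simp
      qed
      also have "\<dots> = w l $ m" by (rule sum_ind2) auto
      finally show "(\<Sum>i\<in>C. a i *s w i) $ m = 0 $ m" by simp
    qed
    with indep i have "a i = 0" by blast
    thus ?thesis by (simp add: a_def)
  qed
  have "\<forall>l\<in>C. idot u (w l) = f l"
  proof
    fix l assume l: "l \<in> C"
    have "idot u (w l) = (\<Sum>k\<in>UNIV. (\<Sum>i\<in>C. A k i * f i) * w l $ k)"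
      by (simp add: idot_def u_def)
    also have "\<dots> = (\<Sum>i\<in>C. f i * (\<Sum>k\<in>UNIV. A k i * w l $ k))"
      by (simp add: sum_distrib_left sum_distrib_right sum.swap[of _ C] algebra_simps)
    also have "\<dots> = (\<Sum>i\<in>C. f i * (if i = l then 1 else 0))"
      using delta l by (intro sum.cong) auto
    also have "\<dots> = f l" by (rule sum_ind'[OF fin l])
    finally show "idot u (w l) = f l" .
  qed
  thus ?thesis by blast
qed

lemma all5: "(\<forall>k<(5::nat). P k) = (P 0 \<and> P 1 \<and> P 2 \<and> P 3 \<and> P 4)"
  by (auto simp: less_Suc_eq eval_nat_numeral)

lemma mem_grp: "(x, y) \<in> grp p k \<longleftrightarrow> x = k \<and> 1 \<le> y \<and> y \<le> p k"
  by (auto simp: grp_def)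

lemma mem_Rays: "(x, y) \<in> Rays p \<longleftrightarrow> x < 5 \<and> 1 \<le> y \<and> y \<le> p x"
  by (auto simp: Rays_def grp_def)

lemma Rays_Sigma: "Rays p = (SIGMA k:{..<5}. {1..p k})"
  by (auto simp: mem_Rays)

lemma finite_Rays: "finite (Rays p)"
  by (simp add: Rays_Sigma)

definition TT :: "(nat \<Rightarrow> nat) \<Rightarrow> (nat \<times> nat) set" where
  "TT p = Rays p - {(k, 1) | k. k < 5}"

lemma mem_TT: "(x, y) \<in> TT p \<longleftrightarrow> x < 5 \<and> 2 \<le> y \<and> y \<le> p x"
  by (auto simp: TT_def mem_Rays)

lemma TT_Sigma: "TT p = (SIGMA k:{..<5}. {2..p k})"
  by (auto simp: mem_TT)

lemma finite_TT: "finite (TT p)"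
  by (simp add: TT_Sigma)

lemma card_TT: "card (TT p) = (\<Sum>k<5. p k - 1)"
  by (simp add: TT_Sigma)

lemma spec_notin_TT: "(k, Suc 0) \<notin> TT p"
  by (simp add: mem_TT)

lemma Rays_split: "Rays p = TT p \<union> {(k, 1) | k. k < 5}" if "\<forall>k<5. 0 < p k"
  using that by (auto simp: TT_def mem_Rays)

lemma primcoll_sub:
  assumes "k < 5" "\<forall>k<5. 0 < p k"
  shows "primcoll p k \<subseteq> TT p \<union> {(a, 1), (b, 1)} \<longleftrightarrow> k \<in> {a, b} \<and> (k + 1) mod 5 \<in> {a, b}"
proof
  assume h: "primcoll p k \<subseteq> TT p \<union> {(a, 1), (b, 1)}"
  have pp: "1 \<le> p ((k+1) mod 5)" using assms(2) by (simp add: Suc_le_eq)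
  have "(k, 1) \<in> primcoll p k" using assms by (auto simp: primcoll_def mem_grp)
  moreover have "((k+1) mod 5, 1) \<in> primcoll p k"
    unfolding primcoll_def using pp by (simp add: mem_grp)
  ultimately show "k \<in> {a, b} \<and> (k + 1) mod 5 \<in> {a, b}"
    using h by (auto simp: mem_TT)
next
  assume h: "k \<in> {a, b} \<and> (k + 1) mod 5 \<in> {a, b}"
  show "primcoll p k \<subseteq> TT p \<union> {(a, 1), (b, 1)}"
  proof
    fix z assume z: "z \<in> primcoll p k"
    obtain x y where xy: "z = (x, y)" by force
    have "x < 5" using z assms(1) by (auto simp: xy primcoll_def mem_grp)
    show "z \<in> TT p \<union> {(a, 1), (b, 1)}"
    proof (cases "y = 1")
      case True thus ?thesis using z h by (auto simp: xy primcoll_def mem_grp)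
    next
      case False thus ?thesis using z \<open>x < 5\<close> by (auto simp: xy primcoll_def mem_grp mem_TT)
    qed
  qed
qed

lemma cone_iff:
  assumes "a < 5" "b < 5" "\<forall>k<5. 0 < p k"
  shows "is_cone p (TT p \<union> {(a, 1), (b, 1)}) \<longleftrightarrow> (\<forall>k<5. \<not> (k \<in> {a, b} \<and> (k + 1) mod 5 \<in> {a, b}))"
proof -
  have "TT p \<union> {(a, 1), (b, 1)} \<subseteq> Rays p"
    using assms by (auto simp: TT_def mem_Rays)
  thus ?thesis using primcoll_sub[OF _ assms(3)] by (auto simp: is_cone_def)
qed

locale L =
  fixes p :: "nat \<Rightarrow> nat" and b c :: "nat \<Rightarrow> nat"
    and w :: "nat \<times> nat \<Rightarrow> int ^ 'n"
    and deg :: "(nat \<times> nat) multiset \<Rightarrow> int"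
  assumes ppos: "\<forall>k<5. 0 < p k"
    and dim: "CARD('n) + 3 = p 0 + p 1 + p 2 + p 3 + p 4"
    and fan: "smooth_projective_complete_fan p w"
    and rel1: "(\<Sum>i\<in>grp p 0. w i) + (\<Sum>i\<in>grp p 1. w i)
               = (\<Sum>j\<in>{2..p 2}. int (c j) *s w (2, j)) + (\<Sum>j\<in>{1..p 3}. int (b j + 1) *s w (3, j))"
    and rel2: "(\<Sum>i\<in>grp p 1. w i) + (\<Sum>i\<in>grp p 2. w i) = (\<Sum>i\<in>grp p 4. w i)"
    and rel3: "(\<Sum>i\<in>grp p 2. w i) + (\<Sum>i\<in>grp p 3. w i) = 0"
    and degX: "toric_degree p w deg"
begin

definition Q where "Q x y = deg (mset_set (TT p) + {#x, y#})"

lemma Q_sym: "Q x y = Q y x"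
  by (simp add: Q_def add_mset_commute)

lemma cardT2: "card (TT p) + 2 = CARD('n)"
proof -
  have "p 0 > 0" "p 1 > 0" "p 2 > 0" "p 3 > 0" "p 4 > 0" using ppos by (auto simp: all5)
  thus ?thesis using dim by (simp add: card_TT eval_nat_numeral)
qed

lemma Q_pair:
  assumes "a1 < 5" "b1 < 5" "a1 \<noteq> b1"
  shows "Q (a1, 1) (b1, 1) = (if is_cone p (TT p \<union> {(a1, 1), (b1, 1)}) then 1 else 0)"
proof -
  let ?C = "TT p \<union> {(a1, 1), (b1, 1)}"
  have m: "mset_set ?C = mset_set (TT p) + {#(a1, 1), (b1, 1)#}"
    using assms by (simp add: finite_TT mset_set_Union spec_notin_TT)
  have cC: "card ?C = CARD('n)"
    using assms cardT2 by (simp add: finite_TT spec_notin_TT)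
  have sub: "?C \<subseteq> Rays p"
    using assms ppos by (auto simp: TT_def mem_Rays)
  show ?thesis
  proof (cases "is_cone p ?C")
    case True
    then have "deg (mset_set ?C) = 1" using degX cC by (simp add: toric_degree_def)
    thus ?thesis using True m by (simp add: Q_def)
  next
    case False
    have "size (mset_set (TT p) + {#(a1, 1), (b1, 1)#}) = CARD('n)"
      using cardT2 by simp
    moreover have "set_mset (mset_set (TT p) + {#(a1, 1), (b1, 1)#}) = ?C"
      by (auto simp: finite_TT)
    ultimately have "deg (mset_set (TT p) + {#(a1, 1), (b1, 1)#}) = 0"
      using degX False sub unfolding toric_degree_def by metis
    thus ?thesis using False by (simp add: Q_def)
  qed
qed

lemma linrel:
  assumes "x \<in> Rays p"
  shows "(\<Sum>l\<in>Rays p. idot u (w l) * Q x l) = 0"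
proof -
  have "size (mset_set (TT p) + {#x#}) + 1 = CARD('n)" using cardT2 by simp
  moreover have "set_mset (mset_set (TT p) + {#x#}) \<subseteq> Rays p"
    using assms using finite_TT[of p] by (auto simp: TT_def)
  ultimately have "(\<Sum>i\<in>Rays p. idot u (w i) * deg (mset_set (TT p) + {#x#} + {#i#})) = 0"
    using degX unfolding toric_degree_def by blast
  thus ?thesis by (simp add: Q_def add_mset_commute)
qed

lemma dual:
  "\<exists>u. \<forall>l\<in>TT p \<union> {(0, 1), (2, 1)}. idot u (w l) = f l"
proof -
  let ?C = "TT p \<union> {(0::nat, 1::nat), (2, 1)}"
  have cone: "is_cone p ?C"
    using cone_iff[of 0 2 p] ppos by (simp add: all5)
  have cC: "card ?C = CARD('n)"
    using cardT2 by (simp add: finite_TT spec_notin_TT)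
  have sm: "\<forall>C. is_cone p C \<and> card C = CARD('n) \<longrightarrow>
        (\<forall>x :: int ^ 'n. \<exists>a. x = (\<Sum>i\<in>C. a i *s w i)) \<and>
        (\<forall>a. (\<Sum>i\<in>C. a i *s w i) = 0 \<longrightarrow> (\<forall>i\<in>C. a i = 0))"
    using fan unfolding smooth_projective_complete_fan_def by (elim conjE) assumption
  have "(\<forall>x :: int ^ 'n. \<exists>a. x = (\<Sum>i\<in>?C. a i *s w i)) \<and>
        (\<forall>a. (\<Sum>i\<in>?C. a i *s w i) = 0 \<longrightarrow> (\<forall>i\<in>?C. a i = 0))"
    using sm cone cC by blast
  then show ?thesis using dual_exists[of ?C w f] by (simp add: finite_TT)
qed

lemma Qvals:
  "Q (0,1) (1,1) = 0" "Q (1,1) (2,1) = 0" "Q (2,1) (3,1) = 0" "Q (3,1) (4,1) = 0" "Q (0,1) (4,1) = 0"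
  "Q (0,1) (2,1) = 1" "Q (0,1) (3,1) = 1" "Q (1,1) (3,1) = 1" "Q (1,1) (4,1) = 1" "Q (2,1) (4,1) = 1"
  using Q_pair[of 0 1] Q_pair[of 1 2] Q_pair[of 2 3] Q_pair[of 3 4] Q_pair[of 0 4]
    Q_pair[of 0 2] Q_pair[of 0 3] Q_pair[of 1 3] Q_pair[of 1 4] Q_pair[of 2 4]
    cone_iff[of 0 1 p] cone_iff[of 1 2 p] cone_iff[of 2 3 p] cone_iff[of 3 4 p] cone_iff[of 0 4 p]
    cone_iff[of 0 2 p] cone_iff[of 0 3 p] cone_iff[of 1 3 p] cone_iff[of 1 4 p] cone_iff[of 2 4 p]
  by (simp_all add: ppos all5)

lemmas Qvals' = Qvals Qvals[THEN trans[OF Q_sym]]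

lemma grp_image: "grp p k = Pair k ` {1..p k}"
  by (auto simp: grp_def)

lemma specs_image: "{(k, 1::nat) | k. k < (5::nat)} = (\<lambda>k. (k, 1)) ` {..<5}"
  by auto

context
  fixes u :: "int ^ 'n" and k0 j0 :: nat
  assumes hT: "\<forall>l\<in>TT p. idot u (w l) = (if l = (k0, j0) then 1 else 0)"
    and hi: "k0 < 5 \<Longrightarrow> (k0, j0) \<in> TT p"
begin

lemma sum_j:
  assumes k: "k < 5"
  shows "(\<Sum>j\<in>{2..p k}. g j * idot u (w (k, j))) = (if k = k0 then g j0 else 0)"
proof -
  have "(\<Sum>j\<in>{2..p k}. g j * idot u (w (k, j))) = (\<Sum>j\<in>{2..p k}. g j * (if k = k0 \<and> j = j0 then 1 else 0))"
    using hT k by (intro sum.cong) (auto simp: mem_TT)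
  also have "\<dots> = (if k = k0 then g j0 else 0)"
  proof (cases "k = k0")
    case True
    then have "j0 \<in> {2..p k}" using hi k by (auto simp: mem_TT)
    thus ?thesis using True by (simp add: mult_ind sum.delta')
  qed simp
  finally show ?thesis .
qed

lemma grp_sum:
  assumes k: "k < 5"
  shows "(\<Sum>i\<in>grp p k. idot u (w i)) = idot u (w (k, 1)) + (if k = k0 then 1 else 0)"
proof -
  have pk: "1 \<le> p k" using ppos k by (simp add: Suc_le_eq)
  have "(\<Sum>i\<in>grp p k. idot u (w i)) = (\<Sum>j\<in>{1..p k}. idot u (w (k, j)))"
    by (simp add: grp_image sum.reindex inj_on_def)
  also have "\<dots> = idot u (w (k, 1)) + (\<Sum>j\<in>{2..p k}. idot u (w (k, j)))"
    using pk by (simp add: sum.atLeast_Suc_atMost numeral_2_eq_2)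
  also have "(\<Sum>j\<in>{2..p k}. idot u (w (k, j))) = (if k = k0 then 1 else 0)"
    using sum_j[OF k, of "\<lambda>_. 1"] by simp
  finally show ?thesis .
qed

lemma gs:
  "(\<Sum>i\<in>grp p 0. idot u (w i)) = idot u (w (0, 1)) + (if 0 = k0 then 1 else 0)"
  "(\<Sum>i\<in>grp p 1. idot u (w i)) = idot u (w (1, 1)) + (if 1 = k0 then 1 else 0)"
  "(\<Sum>i\<in>grp p 2. idot u (w i)) = idot u (w (2, 1)) + (if 2 = k0 then 1 else 0)"
  "(\<Sum>i\<in>grp p 3. idot u (w i)) = idot u (w (3, 1)) + (if 3 = k0 then 1 else 0)"
  "(\<Sum>i\<in>grp p 4. idot u (w i)) = idot u (w (4, 1)) + (if 4 = k0 then 1 else 0)"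
  by (rule grp_sum; simp)+

lemma sj:
  "(\<Sum>j\<in>{2..p 2}. int (c j) * idot u (w (2, j))) = (if 2 = k0 then int (c j0) else 0)"
  "(\<Sum>j\<in>{2..p 3}. int (b j + 1) * idot u (w (3, j))) = (if 3 = k0 then int (b j0 + 1) else 0)"
  by (rule sum_j; simp)+

lemma eq3: "idot u (w (2,1)) + (if k0 = 2 then 1 else 0) + idot u (w (3,1)) + (if k0 = 3 then 1 else 0) = 0"
proof -
  have "idot u ((\<Sum>i\<in>grp p 2. w i) + (\<Sum>i\<in>grp p 3. w i)) = 0" using rel3 by (simp add: idot_zero)
  thus ?thesis unfolding idot_add idot_sum gs by (auto split: if_splits)
qed

lemma eq2: "idot u (w (1,1)) + (if k0 = 1 then 1 else 0) + idot u (w (2,1)) + (if k0 = 2 then 1 else 0)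
   = idot u (w (4,1)) + (if k0 = 4 then 1 else 0)"
proof -
  have "idot u ((\<Sum>i\<in>grp p 1. w i) + (\<Sum>i\<in>grp p 2. w i)) = idot u (\<Sum>i\<in>grp p 4. w i)" using rel2 by simp
  thus ?thesis unfolding idot_add idot_sum gs by (auto split: if_splits)
qed

lemma eq1: "idot u (w (0,1)) + (if k0 = 0 then 1 else 0) + idot u (w (1,1)) + (if k0 = 1 then 1 else 0)
   = (if k0 = 2 then int (c j0) else 0) + int (b 1 + 1) * idot u (w (3,1)) + (if k0 = 3 then int (b j0 + 1) else 0)"
proof -
  have p3: "1 \<le> p 3" using ppos by (simp add: all5 Suc_le_eq)
  have "idot u ((\<Sum>i\<in>grp p 0. w i) + (\<Sum>i\<in>grp p 1. w i))
     = idot u ((\<Sum>j\<in>{2..p 2}. int (c j) *s w (2, j)) + (\<Sum>j\<in>{1..p 3}. int (b j + 1) *s w (3, j)))"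
    using rel1 by simp
  also have "\<dots> = (\<Sum>j\<in>{2..p 2}. int (c j) * idot u (w (2, j))) + (\<Sum>j\<in>{1..p 3}. int (b j + 1) * idot u (w (3, j)))"
    unfolding idot_add idot_sum idot_smult ..
  also have "(\<Sum>j\<in>{1..p 3}. int (b j + 1) * idot u (w (3, j)))
      = int (b 1 + 1) * idot u (w (3, 1)) + (\<Sum>j\<in>{2..p 3}. int (b j + 1) * idot u (w (3, j)))"
    by (simp only: sum.atLeast_Suc_atMost[OF p3] Suc_1)
  finally show ?thesis
    unfolding idot_add idot_sum gs sj by (auto split: if_splits)
qed

lemma relx:
  assumes x: "x \<in> Rays p"
  shows "(if k0 < 5 then Q x (k0, j0) else 0) + idot u (w (0,1)) * Q x (0,1) + idot u (w (1,1)) * Q x (1,1)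
     + idot u (w (2,1)) * Q x (2,1) + idot u (w (3,1)) * Q x (3,1) + idot u (w (4,1)) * Q x (4,1) = 0"
proof -
  have "0 = (\<Sum>l\<in>Rays p. idot u (w l) * Q x l)" using linrel[OF x] by simp
  also have "\<dots> = (\<Sum>l\<in>TT p. idot u (w l) * Q x l) + (\<Sum>l\<in>{(k, 1) | k. k < 5}. idot u (w l) * Q x l)"
    by (subst Rays_split[OF ppos], rule sum.union_disjoint) (auto simp: finite_TT mem_TT)
  also have "(\<Sum>l\<in>TT p. idot u (w l) * Q x l) = (\<Sum>l\<in>TT p. (if l = (k0, j0) then 1 else 0) * Q x l)"
    using hT by (intro sum.cong) auto
  also have "\<dots> = (if k0 < 5 then Q x (k0, j0) else 0)"
  proof (cases "k0 < 5")
    case True thus ?thesis using hi by (simp add: ind_mult sum.delta' finite_TT)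
  next
    case False
    then have "(k0, j0) \<notin> TT p" by (simp add: mem_TT)
    thus ?thesis using False by (simp add: ind_mult sum.delta' finite_TT)
  qed
  also have "(\<Sum>l\<in>{(k, 1) | k. k < 5}. idot u (w l) * Q x l) = (\<Sum>k<5. idot u (w (k, 1)) * Q x (k, 1))"
    unfolding specs_image by (simp add: sum.reindex inj_on_def)
  finally show ?thesis by (simp add: eval_nat_numeral add.assoc)
qed

end

lemma obtain_u:
  "\<exists>u. (\<forall>l\<in>TT p. idot u (w l) = (if l = (k0, j0) then 1 else 0)) \<and> idot u (w (0, 1)) = a0 \<and> idot u (w (2, 1)) = a2"
proof -
  obtain u where u: "\<forall>l\<in>TT p \<union> {(0, 1), (2, 1)}.
     idot u (w l) = (\<lambda>l. if l \<in> TT p then (if l = (k0, j0) then 1 else 0) else if l = (0, 1) then a0 else a2) l"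
    using dual[of "\<lambda>l. if l \<in> TT p then (if l = (k0, j0) then 1 else 0) else if l = (0, 1) then a0 else a2"] by blast
  then show ?thesis by (intro exI[of _ u]) (auto simp: mem_TT)
qed

lemma rays_spec: "k < 5 \<Longrightarrow> (k, 1) \<in> Rays p"
  using ppos by (auto simp: mem_Rays Suc_le_eq)

lemma spec_diag:
  "Q (0,1) (0,1) = 0" "Q (1,1) (1,1) = -1" "Q (4,1) (4,1) = -1"
  "Q (2,1) (2,1) = int (b 1)" "Q (3,1) (3,1) = - int (b 1) - 1"
proof -
  obtain u where hT: "\<forall>l\<in>TT p. idot u (w l) = (if l = (5::nat, 2::nat) then 1 else 0)"
    and a0: "idot u (w (0, 1)) = 1" and a2: "idot u (w (2, 1)) = 0"
    using obtain_u by blast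
  have hi: "(5::nat) < 5 \<Longrightarrow> (5::nat, 2::nat) \<in> TT p" by simp
  note e1 = eq1[OF hT hi] and e2 = eq2[OF hT hi] and e3 = eq3[OF hT hi]
  have t1: "idot u (w (3,1)) = 0" using e3 a2 by simp
  have y1: "idot u (w (1,1)) = -1" using e1 a0 t1 by simp
  have u1: "idot u (w (4,1)) = -1" using e2 a2 y1 by simp
  show "Q (0,1) (0,1) = 0" using relx[OF hT hi rays_spec[of 0]] a0 a2 t1 y1 u1 Qvals' by simp
  show "Q (1,1) (1,1) = -1" using relx[OF hT hi rays_spec[of 1]] a0 a2 t1 y1 u1 Qvals' by simp
  show "Q (4,1) (4,1) = -1" using relx[OF hT hi rays_spec[of 4]] a0 a2 t1 y1 u1 Qvals' by simp
next
  obtain u where hT: "\<forall>l\<in>TT p. idot u (w l) = (if l = (5::nat, 2::nat) then 1 else 0)"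
    and a0: "idot u (w (0, 1)) = 0" and a2: "idot u (w (2, 1)) = 1"
    using obtain_u by blast
  have hi: "(5::nat) < 5 \<Longrightarrow> (5::nat, 2::nat) \<in> TT p" by simp
  note e1 = eq1[OF hT hi] and e2 = eq2[OF hT hi] and e3 = eq3[OF hT hi]
  have t1: "idot u (w (3,1)) = -1" using e3 a2 by simp
  have y1: "idot u (w (1,1)) = - int (b 1) - 1" using e1 a0 t1 by simp
  have u1: "idot u (w (4,1)) = - int (b 1)" using e2 a2 y1 by simp
  show "Q (2,1) (2,1) = int (b 1)" using relx[OF hT hi rays_spec[of 2]] a0 a2 t1 y1 u1 Qvals' by simp
  show "Q (3,1) (3,1) = - int (b 1) - 1" using relx[OF hT hi rays_spec[of 3]] a0 a2 t1 y1 u1 Qvals' by simp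
qed

definition g :: "nat \<Rightarrow> nat \<Rightarrow> int" where
  "g k j = (if k = 0 then 0 else if k = 1 then -1 else if k = 2 then int (b 1) - 2 * int (c j)
     else if k = 3 then int (b 1) - 2 * int (b j) - 1 else -1)"

lemma Qdiag:
  assumes i: "(k, j) \<in> TT p"
  shows "Q (k, j) (k, j) = g k j"
proof -
  obtain u where hT: "\<forall>l\<in>TT p. idot u (w l) = (if l = (k, j) then 1 else 0)"
    and a0: "idot u (w (0, 1)) = 0" and a2: "idot u (w (2, 1)) = 0"
    using obtain_u by blast
  have hi: "k < 5 \<Longrightarrow> (k, j) \<in> TT p" using i .
  have k5: "k < 5" using i by (simp add: mem_TT)
  have iR: "(k, j) \<in> Rays p" using i by (simp add: TT_def)
  define Y where "Y = idot u (w (1,1))"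
  define T where "T = idot u (w (3,1))"
  define U where "U = idot u (w (4,1))"
  define B where "B = int (b 1)"
  have e1: "(if k = 0 then 1 else 0) + Y + (if k = 1 then 1 else 0)
     = (if k = 2 then int (c j) else 0) + (B + 1) * T + (if k = 3 then int (b j + 1) else 0)"
    using eq1[OF hT hi] a0 by (simp add: Y_def T_def B_def)
  have e2: "Y + (if k = 1 then 1 else 0) + (if k = 2 then 1 else 0) = U + (if k = 4 then 1 else 0)"
    using eq2[OF hT hi] a2 by (simp add: Y_def U_def)
  have e3: "(if k = 2 then 1 else 0) + T + (if k = 3 then 1 else 0) = 0"
    using eq3[OF hT hi] a2 by (simp add: T_def)
  have qy: "Q (1,1) (k,j) = Y - T - U"
    using relx[OF hT hi rays_spec[of 1]] k5 a0 a2 Qvals' spec_diag by (simp add: Y_def T_def U_def)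
  have q33: "Q (3, Suc 0) (3, Suc 0) = - int (b 1) - 1" using spec_diag(5) by simp
  have qt: "Q (3,1) (k,j) = - Y + (B + 1) * T"
    using relx[OF hT hi rays_spec[of 3]] k5 a0 a2 Qvals' spec_diag(1-4)
    by (simp add: Y_def T_def U_def B_def q33 algebra_simps)
  have qu: "Q (4,1) (k,j) = U - Y"
    using relx[OF hT hi rays_spec[of 4]] k5 a0 a2 Qvals' spec_diag by (simp add: Y_def T_def U_def)
  have qi: "Q (k,j) (k,j) + Y * Q (1,1) (k,j) + T * Q (3,1) (k,j) + U * Q (4,1) (k,j) = 0"
    using relx[OF hT hi iR] k5 a0 a2 Q_sym[of "(k,j)" "(1,1)"] Q_sym[of "(k,j)" "(3,1)"] Q_sym[of "(k,j)" "(4,1)"]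
    by (simp add: Y_def T_def U_def)
  have main: "Q (k,j) (k,j) = - (Y * (Y - T - U) + T * (- Y + (B + 1) * T) + U * (U - Y))"
  proof -
    have "Q (k,j) (k,j) = - (Y * Q (1,1) (k,j) + T * Q (3,1) (k,j) + U * Q (4,1) (k,j))"
      using qi by linarith
    also have "\<dots> = - (Y * (Y - T - U) + T * (- Y + (B + 1) * T) + U * (U - Y))"
      unfolding qy qt qu ..
    finally show ?thesis .
  qed
  consider "k = 0" | "k = 1" | "k = 2" | "k = 3" | "k = 4" using k5 by linarith
  then show ?thesis
  proof cases
    case 1
    then have "T = 0" "Y = -1" "U = -1" using e1 e2 e3 by simp_all
    thus ?thesis using main 1 by (simp add: g_def)
  next
    case 2
    then have "T = 0" "Y = -1" "U = 0" using e1 e2 e3 by simp_all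
    thus ?thesis using main 2 by (simp add: g_def)
  next
    case 3
    have t: "T = -1" using e3 3 by simp
    have y: "Y = int (c j) - B - 1" using e1 3 t by simp
    have u: "U = int (c j) - B" using e2 3 y by simp
    show ?thesis using 3 unfolding main t y u by (simp add: g_def B_def algebra_simps)
  next
    case 4
    have t: "T = -1" using e3 4 by simp
    have y: "Y = int (b j) - B" using e1 4 t by simp
    have u: "U = int (b j) - B" using e2 4 y by simp
    show ?thesis using 4 unfolding main t y u by (simp add: g_def B_def algebra_simps)
  next
    case 5
    then have "T = 0" "Y = 0" "U = -1" using e1 e2 e3 by simp_all
    thus ?thesis using main 5 by (simp add: g_def)
  qed
qed

lemma final:
  "(\<Sum>i\<in>Rays p. Q i i)
         = - int (p 1) - int (p 4) + int (b 1) * int (p 2) - 2 * (\<Sum>j\<in>{2..p 2}. int (c j))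
           - (int (b 1) + 1) + (\<Sum>i\<in>{2..p 3}. int (b 1) - 2 * int (b i) - 1)"
proof -
  have pp: "1 \<le> p 0" "1 \<le> p 1" "1 \<le> p 2" "1 \<le> p 3" "1 \<le> p 4" using ppos by (auto simp: all5 Suc_le_eq)
  have "(\<Sum>i\<in>Rays p. Q i i) = (\<Sum>i\<in>TT p. Q i i) + (\<Sum>i\<in>{(k, 1) | k. k < 5}. Q i i)"
    by (subst Rays_split[OF ppos], rule sum.union_disjoint) (auto simp: finite_TT mem_TT)
  also have "(\<Sum>i\<in>{(k, 1) | k. k < 5}. Q i i) = (\<Sum>k<5. Q (k, 1) (k, 1))"
    unfolding specs_image by (simp add: sum.reindex inj_on_def)
  also have "\<dots> = - 3" using spec_diag by (simp add: eval_nat_numeral)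
  also have "(\<Sum>i\<in>TT p. Q i i) = (\<Sum>i\<in>TT p. g (fst i) (snd i))"
    using Qdiag by (intro sum.cong) auto
  also have "\<dots> = (\<Sum>k<5. \<Sum>j\<in>{2..p k}. g k j)"
    unfolding TT_Sigma by (simp add: sum.Sigma split_beta)
  also have "\<dots> = (\<Sum>j\<in>{2..p 1}. -1) + (\<Sum>j\<in>{2..p 2}. int (b 1) - 2 * int (c j))
      + (\<Sum>j\<in>{2..p 3}. int (b 1) - 2 * int (b j) - 1) + (\<Sum>j\<in>{2..p 4}. -1)"
    by (simp add: eval_nat_numeral g_def)
  also have "(\<Sum>j\<in>{2..p 2}. int (b 1) - 2 * int (c j)) = int (b 1) * (int (p 2) - 1) - 2 * (\<Sum>j\<in>{2..p 2}. int (c j))"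
    using pp by (simp add: sum_subtractf sum_distrib_left of_nat_diff algebra_simps)
  finally show ?thesis using pp by (simp add: of_nat_diff algebra_simps)
qed

end

theorem mainTheorem4:
  fixes p :: "nat \<Rightarrow> nat" and b c :: "nat \<Rightarrow> nat"
    and w :: "nat \<times> nat \<Rightarrow> int ^ 'n"
    and deg :: "(nat \<times> nat) multiset \<Rightarrow> int"
  assumes ppos: "\<forall>k<5. 0 < p k"
    and dim: "CARD('n) + 3 = p 0 + p 1 + p 2 + p 3 + p 4"
    and fan: "smooth_projective_complete_fan p w"
    and rel1: "(\<Sum>i\<in>grp p 0. w i) + (\<Sum>i\<in>grp p 1. w i)
               = (\<Sum>j\<in>{2..p 2}. int (c j) *s w (2, j)) + (\<Sum>j\<in>{1..p 3}. int (b j + 1) *s w (3, j))"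
    and rel2: "(\<Sum>i\<in>grp p 1. w i) + (\<Sum>i\<in>grp p 2. w i) = (\<Sum>i\<in>grp p 4. w i)"
    and rel3: "(\<Sum>i\<in>grp p 2. w i) + (\<Sum>i\<in>grp p 3. w i) = 0"
    and rel4: "(\<Sum>i\<in>grp p 3. w i) + (\<Sum>i\<in>grp p 4. w i) = (\<Sum>i\<in>grp p 1. w i)"
    and rel5: "(\<Sum>i\<in>grp p 4. w i) + (\<Sum>i\<in>grp p 0. w i)
               = (\<Sum>j\<in>{2..p 2}. int (c j) *s w (2, j)) + (\<Sum>j\<in>{1..p 3}. int (b j) *s w (3, j))"
    and cmin: "\<forall>j\<in>{2..p 2}. c 2 \<le> c j"
    and bmin: "\<forall>i\<in>{1..p 3}. b 1 \<le> b i"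
    and degX: "toric_degree p w deg"
  shows "(\<Sum>i\<in>Rays p. deg (mset_set (Rays p - {(k, 1) | k. k < 5}) + {#i, i#}))
         = - int (p 1) - int (p 4) + int (b 1) * int (p 2) - 2 * (\<Sum>j\<in>{2..p 2}. int (c j))
           - (int (b 1) + 1) + (\<Sum>i\<in>{2..p 3}. int (b 1) - 2 * int (b i) - 1)"
proof -
  interpret L p b c w deg
    using ppos dim fan rel1 rel2 rel3 degX by (rule L.intro)
  show ?thesis using final unfolding Q_def TT_def .
qed

end
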